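(* Let $\alpha,\beta,\gamma,\delta\in\mathbb{C}$ be parameters for which all gamma functions and hypergeometric functions below are well-defined, and for $z\ne0$ let $$f(\alpha,\beta,\gamma,\delta;z)=\sum_{\nu=0}^{\infty}\frac{z^{-\nu}\Gamma(\alpha+\gamma+\nu)}{\nu!\,\Gamma(\beta+\nu)}\,E\left(\begin{matrix}\alpha+1,&\beta+\nu\\ \delta,&\beta+1+\nu\end{matrix};z\right).$$ Then $$f(\alpha,\beta,\gamma,\delta;z)=\frac{\Gamma(\alpha+1)\Gamma(\alpha+\gamma)}{\Gamma(\beta+1)\Gamma(\delta)}+O(z^{-1})\quad\text{as }|z|\to\infty.$$
   Context: For complex parameters $a_1,\dots,a_p$, $b_1,\dots,b_q$ with $p\le q$ and $z\in\mathbb{C}\setminus\{0\}$, the MacRobert $E$-function is $$E\left(\begin{matrix}a_1,\dots,a_p\\ b_1,\dots,b_q\end{matrix};z\right)=\frac{\prod_{j=1}^p\Gamma(a_j)}{\prod_{j=1}^q\Gamma(b_j)}\,{}_pF_q\left(\begin{matrix}a_1,\dots,a_p\\ b_1,\dots,b_q\end{matrix};-\frac1z\right),$$ where ${}_pF_q$ is the generalized hypergeometric function. *)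

theory Defs
  imports "HOL-Analysis.Analysis" "HOL-Library.Landau_Symbols"
begin

definition hypergeom :: "complex list \<Rightarrow> complex list \<Rightarrow> complex \<Rightarrow> complex" where
  "hypergeom as bs z =
     (\<Sum>n. (prod_list (map (\<lambda>a. pochhammer a n) as) /
            prod_list (map (\<lambda>b. pochhammer b n) bs)) * z ^ n / fact n)"

text \<open>MacRobert E-function (p at most q).\<close>
definition macrobertE :: "complex list \<Rightarrow> complex list \<Rightarrow> complex \<Rightarrow> complex" where
  "macrobertE as bs z =
     prod_list (map Gamma as) / prod_list (map Gamma bs) * hypergeom as bs (- 1 / z)"

definition fE :: "complex \<Rightarrow> complex \<Rightarrow> complex \<Rightarrow> complex \<Rightarrow> complex \<Rightarrow> complex" where
  "fE \<alpha> \<beta> \<gamma> \<delta> z =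
     (\<Sum>\<nu>. (inverse z) ^ \<nu> * Gamma (\<alpha> + \<gamma> + of_nat \<nu>) / (fact \<nu> * Gamma (\<beta> + of_nat \<nu>))
          * macrobertE [\<alpha> + 1, \<beta> + of_nat \<nu>] [\<delta>, \<beta> + 1 + of_nat \<nu>] z)"

end

theory Submission imports Defs begin
lemma inv_bound: fixes s :: complex
  shows "\<exists>B\<ge>1. \<forall>k. norm (inverse (s + of_nat k)) \<le> B"
proof -
  define N where "N = nat \<lceil>norm s\<rceil> + 1"
  define B where "B = max 1 (Max ((\<lambda>k. norm (inverse (s + of_nat k))) ` {..N}))"
  have "norm (inverse (s + of_nat k)) \<le> B" for k
  proof (cases "k \<le> N")
    case True thus ?thesis unfolding B_def by (intro max.coboundedI2 Max_ge) auto
  next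
    case False
    hence "real k \<ge> norm s + 1" unfolding N_def by linarith
    moreover have "norm (s + of_nat k) \<ge> real k - norm s"
      using norm_triangle_ineq2[of "of_nat k" "-s"] by (simp add: add.commute)
    ultimately have "norm (s + of_nat k) \<ge> 1" by linarith
    hence "norm (inverse (s + of_nat k)) \<le> 1"
      by (simp add: norm_inverse inverse_le_1_iff)
    thus ?thesis unfolding B_def by linarith
  qed
  thus ?thesis unfolding B_def by (intro exI[of _ B]) (auto simp: B_def)
qed

lemma inv_poch_bound: fixes s :: complex
  assumes "\<forall>k. norm (inverse (s + of_nat k)) \<le> B"
  shows "norm (inverse (pochhammer s n)) \<le> B ^ n"
proof (induction n)
  case 0 thus ?case by simp
next
  case (Suc n)
  have eq: "norm (inverse (pochhammer s (Suc n))) = norm (inverse (pochhammer s n)) * norm (inverse (s + of_nat n))"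
    by (simp add: pochhammer_Suc norm_mult)
  have B0: "0 \<le> B" using assms[rule_format, of 0] norm_ge_zero order_trans by blast
  have "norm (inverse (pochhammer s n)) * norm (inverse (s + of_nat n)) \<le> B ^ n * B" using Suc assms B0 by (intro mult_mono) auto
  thus ?case unfolding eq by (simp add: mult.commute)
qed

lemma poch_fact_bound: fixes s :: complex
  shows "norm (pochhammer s n / fact n) \<le> (1 + norm s) ^ n"
proof (induction n)
  case 0 thus ?case by simp
next
  case (Suc n)
  have eq: "pochhammer s (Suc n) / fact (Suc n) = (pochhammer s n / fact n) * ((s + of_nat n) / of_nat (Suc n))"
    by (simp add: pochhammer_Suc field_simps fact_Suc del: of_nat_Suc)
  have "norm ((s + of_nat n) / of_nat (Suc n)) \<le> 1 + norm s"
  proof -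
    have "norm (s + of_nat n) \<le> norm s + real n" using norm_triangle_ineq[of s "of_nat n"] by simp
    also have "\<dots> \<le> (1 + norm s) * real (Suc n)" by (simp add: algebra_simps)
    finally show ?thesis by (simp add: norm_divide divide_le_eq del: of_nat_Suc)
  qed
  hence "norm (pochhammer s (Suc n) / fact (Suc n)) \<le> (1 + norm s) ^ n * (1 + norm s)"
    unfolding eq norm_mult using Suc by (intro mult_mono) auto
  thus ?case by (simp add: mult.commute)
qed

lemma poch_ratio_bound: fixes x :: complex
  assumes "\<forall>k. norm (inverse (x + 1 + of_nat k)) \<le> B"
  shows "norm (pochhammer x n / pochhammer (x + 1) n) \<le> (1 + B) ^ n"
proof (induction n)
  case 0 thus ?case by simp
next
  case (Suc n)
  let ?y = "x + 1 + of_nat n"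
  have eq: "pochhammer x (Suc n) / pochhammer (x+1) (Suc n) = (pochhammer x n / pochhammer (x+1) n) * ((?y - 1) * inverse ?y)"
    by (simp add: pochhammer_Suc field_simps)
  have "norm ((?y - 1) * inverse ?y) \<le> 1 + B"
  proof -
    have "norm ((?y - 1) * inverse ?y) = norm (?y * inverse ?y - inverse ?y)" by (simp add: algebra_simps)
    also have "\<dots> \<le> norm (?y * inverse ?y) + norm (inverse ?y)" by (rule norm_triangle_ineq4)
    also have "norm (?y * inverse ?y) \<le> 1" by (cases "?y = 0") auto
    finally show ?thesis using assms[rule_format, of n] by linarith
  qed
  hence "norm (pochhammer x (Suc n) / pochhammer (x+1) (Suc n)) \<le> (1 + B) ^ n * (1 + B)"
    unfolding eq norm_mult using Suc by (intro mult_mono) (auto intro: order_trans[OF norm_ge_zero])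
  thus ?case by (simp add: mult.commute)
qed
lemma geo_tail: fixes c :: "nat \<Rightarrow> complex"
  assumes le: "\<And>n. norm (c n) \<le> C * q ^ n" and q0: "0 \<le> q" and q1: "q \<le> 1/2"
  shows "summable c" "norm (suminf c - c 0) \<le> 2 * C * q"
proof -
  have "norm (c 0) \<le> C" using le[of 0] by simp
  hence C0: "0 \<le> C" using norm_ge_zero order_trans by blast
  have sg: "summable (\<lambda>n. q ^ n)" using q0 q1 by (intro summable_geometric) auto
  have sg2: "summable (\<lambda>n. C * q ^ n)" using sg by (rule summable_mult)
  show sc: "summable c" by (rule summable_comparison_test'[OF sg2 le])
  have sc1: "summable (\<lambda>n. c (Suc n))" using sc by (simp add: summable_Suc_iff)
  have sn: "summable (\<lambda>n. norm (c (Suc n)))"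
    by (rule summable_comparison_test'[of "\<lambda>n. C * q * q ^ n" 0]) (use sg in \<open>auto intro: summable_mult order_trans[OF le] simp: mult.assoc\<close>)
  have "suminf c - c 0 = (\<Sum>n. c (Suc n))" using suminf_split_head[OF sc] by simp
  hence "norm (suminf c - c 0) \<le> (\<Sum>n. norm (c (Suc n)))" using summable_norm[OF sn] by simp
  also have "\<dots> \<le> (\<Sum>n. C * q * q ^ n)"
    by (rule suminf_le) (use sn sg in \<open>auto intro: summable_mult order_trans[OF le] simp: mult.assoc\<close>)
  also have "\<dots> = C * q * (1 / (1 - q))"
    using suminf_geometric[of q] q0 q1 by (subst suminf_mult) auto
  also have "\<dots> \<le> C * q * 2" using q0 q1 C0 by (intro mult_left_mono) (auto simp: field_simps)
  finally show "norm (suminf c - c 0) \<le> 2 * C * q" by simp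
qed

lemma hyp_bound: fixes a b d w :: complex
  assumes Bb: "\<forall>k. norm (inverse (b + 1 + of_nat k)) \<le> B"
      and Dd: "\<forall>k. norm (inverse (d + of_nat k)) \<le> D"
      and Kw: "(1 + norm a) * (1 + B) * D * norm w \<le> 1/2"
  shows "norm (hypergeom [a, b] [d, b + 1] w - 1) \<le> 2 * ((1 + norm a) * (1 + B) * D) * norm w"
proof -
  define K where "K = (1 + norm a) * (1 + B) * D"
  define c where "c n = (prod_list (map (\<lambda>a. pochhammer a n) [a, b]) /
            prod_list (map (\<lambda>b. pochhammer b n) [d, b + 1])) * w ^ n / fact n" for n
  have B0: "0 \<le> B" using Bb[rule_format, of 0] norm_ge_zero order_trans by blast
  have D0: "0 \<le> D" using Dd[rule_format, of 0] norm_ge_zero order_trans by blast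
  have K0: "0 \<le> K" unfolding K_def using B0 D0 by auto
  have ceq: "c n = (pochhammer a n / fact n) * (pochhammer b n / pochhammer (b + 1) n) * inverse (pochhammer d n) * w ^ n" for n
    unfolding c_def by (simp add: field_simps)
  have "norm (c n) \<le> 1 * (K * norm w) ^ n" for n
  proof -
    have "norm (c n) = norm (pochhammer a n / fact n) * norm (pochhammer b n / pochhammer (b + 1) n) * norm (inverse (pochhammer d n)) * norm w ^ n"
      by (simp only: ceq norm_mult norm_power)
    also have "\<dots> \<le> (1 + norm a) ^ n * (1 + B) ^ n * D ^ n * norm w ^ n"
      using poch_fact_bound[of a n] poch_ratio_bound[OF Bb, of n] inv_poch_bound[OF Dd, of n] B0 D0
      by (intro mult_mono mult_nonneg_nonneg) auto
    also have "\<dots> = 1 * (K * norm w) ^ n" unfolding K_def by (simp add: power_mult_distrib)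
    finally show ?thesis .
  qed
  from geo_tail(2)[of c 1 "K * norm w", OF this] K0 Kw
  have "norm (suminf c - c 0) \<le> 2 * 1 * (K * norm w)" unfolding K_def by auto
  moreover have "c 0 = 1" unfolding c_def by simp
  moreover have "hypergeom [a, b] [d, b + 1] w = suminf c" unfolding hypergeom_def c_def ..
  ultimately show ?thesis unfolding K_def by simp
qed

lemma Gamma_shift: fixes s :: complex assumes "s \<notin> \<int>\<^sub>\<le>\<^sub>0"
  shows "Gamma (s + of_nat n) = Gamma s * pochhammer s n"
    and "rGamma (s + of_nat n) = rGamma s * inverse (pochhammer s n)"
proof -
  have r: "rGamma s \<noteq> 0" using assms rGamma_eq_zero_iff by auto
  have e: "rGamma s = pochhammer s n * rGamma (s + of_nat n)" by (rule pochhammer_rGamma)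
  with r have p: "pochhammer s n \<noteq> 0" by auto
  from e r have q: "rGamma (s + of_nat n) \<noteq> 0" by auto
  from e p show "rGamma (s + of_nat n) = rGamma s * inverse (pochhammer s n)" by (simp add: field_simps)
  thus "Gamma (s + of_nat n) = Gamma s * pochhammer s n"
    using r p q by (simp add: Gamma_def field_simps)
qed

lemma nonpos_shift: fixes b :: complex assumes "b \<notin> \<int>\<^sub>\<le>\<^sub>0" shows "b + of_nat n \<notin> \<int>\<^sub>\<le>\<^sub>0"
proof
  assume "b + of_nat n \<in> \<int>\<^sub>\<le>\<^sub>0"
  hence "b + of_nat n - of_nat n \<in> \<int>\<^sub>\<le>\<^sub>0" by (rule nonpos_Ints_diff_Nats) auto
  with assms show False by simp
qed

theorem mainTheorem4:
  fixes \<alpha> \<beta> \<gamma> \<delta> :: complex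
  assumes "\<alpha> + 1 \<notin> \<int>\<^sub>\<le>\<^sub>0" and "\<alpha> + \<gamma> \<notin> \<int>\<^sub>\<le>\<^sub>0"
      and "\<beta> \<notin> \<int>\<^sub>\<le>\<^sub>0" and "\<delta> \<notin> \<int>\<^sub>\<le>\<^sub>0"
  shows "(\<lambda>z. fE \<alpha> \<beta> \<gamma> \<delta> z
            - Gamma (\<alpha> + 1) * Gamma (\<alpha> + \<gamma>) / (Gamma (\<beta> + 1) * Gamma \<delta>))
         \<in> O[at_infinity](\<lambda>z. inverse z)"
proof -
  note sA = assms(2) and bA = assms(3)
  define s where "s = \<alpha> + \<gamma>"
  define c where "c = Gamma (\<alpha> + 1) * Gamma (\<alpha> + \<gamma>) / (Gamma (\<beta> + 1) * Gamma \<delta>)"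
  obtain B where B1: "B \<ge> 1" and Bb: "\<forall>k. norm (inverse (\<beta> + 1 + of_nat k)) \<le> B"
    using inv_bound[of "\<beta> + 1"] by auto
  obtain D where D1: "D \<ge> 1" and Dd: "\<forall>k. norm (inverse (\<delta> + of_nat k)) \<le> D"
    using inv_bound[of "\<delta>"] by auto
  define K where "K = (1 + norm (\<alpha> + 1)) * (1 + B) * D"
  define M where "M = (1 + norm s) * B"
  define C where "C = 2 * norm (Gamma s) * norm (Gamma (\<alpha> + 1) / Gamma \<delta>) * norm (rGamma (\<beta> + 1))"
  define R where "R = 1 + 2 * K + 2 * M"
  have K0: "K \<ge> 0" and M0: "M \<ge> 0" and C0: "C \<ge> 0"
    using B1 D1 by (auto simp: K_def M_def C_def)
  have b1: "\<beta> + 1 \<notin> \<int>\<^sub>\<le>\<^sub>0" using bA plus_one_in_nonpos_Ints_imp by blast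
  have main: "norm (fE \<alpha> \<beta> \<gamma> \<delta> z - c) \<le> (2 * C * M + norm c * 2 * K) * norm (inverse z)"
    if z: "R \<le> norm z" for z
  proof -
    have z0: "z \<noteq> 0" using z K0 M0 unfolding R_def by auto
    define w where "w = - 1 / z"
    have nw: "norm w = norm (inverse z)" unfolding w_def by (simp add: norm_divide norm_inverse inverse_eq_divide)
    have Kw: "K * norm w \<le> 1/2"
    proof -
      have "2 * K \<le> norm z" using z M0 unfolding R_def by linarith
      thus ?thesis using z0 K0 by (simp add: nw norm_inverse norm_divide field_simps)
    qed
    have Mw: "M * norm (inverse z) \<le> 1/2"
    proof -
      have "2 * M \<le> norm z" using z K0 unfolding R_def by linarith
      thus ?thesis using z0 M0 by (simp add: norm_inverse norm_divide field_simps)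
    qed
    define H where "H \<nu> = hypergeom [\<alpha> + 1, \<beta> + of_nat \<nu>] [\<delta>, \<beta> + 1 + of_nat \<nu>] w" for \<nu>
    have Hb: "norm (H \<nu> - 1) \<le> 2 * K * norm w" for \<nu>
    proof -
      have Bb': "\<forall>k. norm (inverse (\<beta> + of_nat \<nu> + 1 + of_nat k)) \<le> B"
      proof
        fix k
        have "\<beta> + of_nat \<nu> + 1 + of_nat k = \<beta> + 1 + of_nat (\<nu> + k)" by (simp add: algebra_simps)
        thus "norm (inverse (\<beta> + of_nat \<nu> + 1 + of_nat k)) \<le> B" using Bb by metis
      qed
      have e: "\<beta> + 1 + of_nat \<nu> = \<beta> + of_nat \<nu> + 1" by (simp add: algebra_simps)
      have "H \<nu> = hypergeom [\<alpha> + 1, \<beta> + of_nat \<nu>] [\<delta>, \<beta> + of_nat \<nu> + 1] w" unfolding H_def e ..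
      thus ?thesis using hyp_bound[OF Bb' Dd, of "\<alpha> + 1" w] Kw unfolding K_def by simp
    qed
    have Hn: "norm (H \<nu>) \<le> 2" for \<nu>
    proof -
      have "norm (H \<nu>) \<le> norm (H \<nu> - 1) + norm (1::complex)" using norm_triangle_ineq[of "H \<nu> - 1" 1] by simp
      thus ?thesis using Hb[of \<nu>] Kw by simp
    qed
    define t where "t \<nu> = (inverse z) ^ \<nu> * Gamma (\<alpha> + \<gamma> + of_nat \<nu>) / (fact \<nu> * Gamma (\<beta> + of_nat \<nu>))
          * macrobertE [\<alpha> + 1, \<beta> + of_nat \<nu>] [\<delta>, \<beta> + 1 + of_nat \<nu>] z" for \<nu>
    have fe: "fE \<alpha> \<beta> \<gamma> \<delta> z = suminf t" unfolding fE_def t_def ..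
    have teq: "t \<nu> = inverse z ^ \<nu> * Gamma s * (pochhammer s \<nu> / fact \<nu>) * (Gamma (\<alpha> + 1) / Gamma \<delta>)
        * rGamma (\<beta> + 1) * inverse (pochhammer (\<beta> + 1) \<nu>) * H \<nu>" for \<nu>
    proof -
      have g1: "Gamma (\<alpha> + \<gamma> + of_nat \<nu>) = Gamma s * pochhammer s \<nu>"
        using Gamma_shift(1)[OF sA] unfolding s_def .
      have g2: "Gamma (\<beta> + of_nat \<nu>) \<noteq> 0" using nonpos_shift[OF bA] Gamma_eq_zero_iff by blast
      have g3: "inverse (Gamma (\<beta> + 1 + of_nat \<nu>)) = rGamma (\<beta> + 1) * inverse (pochhammer (\<beta> + 1) \<nu>)"
        using Gamma_shift(2)[OF b1] by (simp add: rGamma_inverse_Gamma)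
      have "t \<nu> = inverse z ^ \<nu> * (Gamma s * pochhammer s \<nu>) / (fact \<nu> * Gamma (\<beta> + of_nat \<nu>))
          * (Gamma (\<alpha> + 1) * Gamma (\<beta> + of_nat \<nu>) * inverse (Gamma (\<beta> + 1 + of_nat \<nu>)) / Gamma \<delta> * H \<nu>)"
        unfolding t_def g1 macrobertE_def H_def w_def by (simp add: field_simps)
      also have "\<dots> = inverse z ^ \<nu> * Gamma s * (pochhammer s \<nu> / fact \<nu>) * (Gamma (\<alpha> + 1) / Gamma \<delta>)
        * inverse (Gamma (\<beta> + 1 + of_nat \<nu>)) * H \<nu>"
        using g2 by (simp add: field_simps)
      finally show ?thesis unfolding g3 by (simp add: mult.assoc)
    qed
    have tb: "norm (t \<nu>) \<le> C * (M * norm (inverse z)) ^ \<nu>" for \<nu>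
    proof -
      have "norm (t \<nu>) = norm (inverse z) ^ \<nu> * norm (Gamma s) * norm (pochhammer s \<nu> / fact \<nu>) * norm (Gamma (\<alpha> + 1) / Gamma \<delta>)
        * norm (rGamma (\<beta> + 1)) * norm (inverse (pochhammer (\<beta> + 1) \<nu>)) * norm (H \<nu>)"
        by (simp only: teq norm_mult norm_power)
      also have "\<dots> \<le> norm (inverse z) ^ \<nu> * norm (Gamma s) * (1 + norm s) ^ \<nu> * norm (Gamma (\<alpha> + 1) / Gamma \<delta>)
        * norm (rGamma (\<beta> + 1)) * B ^ \<nu> * 2"
        using poch_fact_bound[of s \<nu>] inv_poch_bound[OF Bb, of \<nu>] Hn[of \<nu>] B1
        by (intro mult_mono mult_nonneg_nonneg) auto
      also have "\<dots> = C * (M * norm (inverse z)) ^ \<nu>" unfolding C_def M_def by (simp add: power_mult_distrib)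
      finally show ?thesis .
    qed
    have qq: "0 \<le> M * norm (inverse z)" using M0 by simp
    have tail: "norm (suminf t - t 0) \<le> 2 * C * (M * norm (inverse z))"
      by (rule geo_tail(2)[OF tb qq Mw])
    have gb: "Gamma \<beta> \<noteq> 0" using bA Gamma_eq_zero_iff by blast
    have t0: "t 0 = c * H 0"
      unfolding t_def c_def macrobertE_def H_def w_def using gb by (simp add: field_simps)
    have "norm (t 0 - c) = norm c * norm (H 0 - 1)" unfolding t0 by (simp add: norm_mult[symmetric] algebra_simps)
    also have "\<dots> \<le> norm c * (2 * K * norm (inverse z))" using Hb[of 0] nw by (intro mult_left_mono) auto
    finally have h0: "norm (t 0 - c) \<le> norm c * (2 * K * norm (inverse z))" .
    have "fE \<alpha> \<beta> \<gamma> \<delta> z - c = (suminf t - t 0) + (t 0 - c)" unfolding fe by simp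
    hence "norm (fE \<alpha> \<beta> \<gamma> \<delta> z - c) \<le> norm (suminf t - t 0) + norm (t 0 - c)"
      using norm_triangle_ineq by metis
    also have "\<dots> \<le> 2 * C * (M * norm (inverse z)) + norm c * (2 * K * norm (inverse z))"
      using tail h0 by linarith
    finally show ?thesis by (simp add: algebra_simps)
  qed
  have "eventually (\<lambda>z. norm (fE \<alpha> \<beta> \<gamma> \<delta> z - c) \<le> (2 * C * M + norm c * 2 * K) * norm (inverse z)) at_infinity"
    unfolding eventually_at_infinity using main by blast
  hence "(\<lambda>z. fE \<alpha> \<beta> \<gamma> \<delta> z - c) \<in> O[at_infinity](\<lambda>z. inverse z)" by (rule bigoI)
  thus ?thesis unfolding c_def .
qed

end
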